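(* An uncountable separable metrizable space $X$ is a Lusin set if and only if $t(K)=\omega$ for every compact subset $K$ of $Q_p(X,\mathbb{R})$.
   Context: A function $f:X\to\mathbb{R}$ is quasicontinuous if for every $x\in X$, every open $V\ni f(x)$ and every open $U\ni x$ there is a nonempty open $W\subseteq U$ with $f(W)\subseteq V$. $Q_p(X,\mathbb{R})$ is the set of all quasicontinuous real-valued functions on $X$ with the topology of pointwise convergence. A separable metrizable space $X$ is a Lusin set ($\aleph_1$-Lusin set) if $X$ is uncountable and $X\cap M$ is countable for every meager subset $M$ of $X$. $t(K)=\omega$ means: for every $z\in K$ and $A\subseteq K$ with $z\in\overline{A}$ there is a countable $B\subseteq A$ with $z\in\overline{B}$. *)

theory Defs
  imports "HOL-Analysis.Analysis"
begin

definition nowhere_dense_in :: "'a topology \<Rightarrow> 'a set \<Rightarrow> bool" where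
  "nowhere_dense_in X S \<longleftrightarrow> S \<subseteq> topspace X \<and> X interior_of (X closure_of S) = {}"

definition meager_in :: "'a topology \<Rightarrow> 'a set \<Rightarrow> bool" where
  "meager_in X M \<longleftrightarrow> (\<exists>F. countable F \<and> (\<forall>S\<in>F. nowhere_dense_in X S) \<and> M = \<Union>F)"

definition lusin_set :: "'a topology \<Rightarrow> bool" where
  "lusin_set X \<longleftrightarrow> separable_space X \<and> metrizable_space X \<and> uncountable (topspace X) \<and>
     (\<forall>M. meager_in X M \<longrightarrow> countable M)"

definition quasicontinuous :: "'a topology \<Rightarrow> ('a \<Rightarrow> real) \<Rightarrow> bool" where
  "quasicontinuous X f \<longleftrightarrow>
     (\<forall>x\<in>topspace X. \<forall>V U. open V \<and> f x \<in> V \<and> openin X U \<and> x \<in> U \<longrightarrow>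
        (\<exists>W. openin X W \<and> W \<noteq> {} \<and> W \<subseteq> U \<and> f ` W \<subseteq> V))"

text \<open>Q_p(X,R): quasicontinuous real functions on X (represented extensionally,
  i.e. undefined outside topspace X) with the topology of pointwise convergence.\<close>
definition Qp :: "'a topology \<Rightarrow> ('a \<Rightarrow> real) topology" where
  "Qp X = subtopology (product_topology (\<lambda>_. euclideanreal) (topspace X))
            {f \<in> extensional (topspace X). quasicontinuous X f}"

definition countable_tightness :: "'a topology \<Rightarrow> bool" where
  "countable_tightness T \<longleftrightarrow>
     (\<forall>z\<in>topspace T. \<forall>A. A \<subseteq> topspace T \<and> z \<in> T closure_of A \<longrightarrow>
        (\<exists>B. B \<subseteq> A \<and> countable B \<and> z \<in> T closure_of B))"

end

theory Submission
  imports Defs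
begin


lemma nowhere_dense_byW:
  assumes "S \<subseteq> topspace X"
    and "\<And>U. openin X U \<Longrightarrow> U \<noteq> {} \<Longrightarrow> \<exists>W. openin X W \<and> W \<noteq> {} \<and> W \<subseteq> U \<and> W \<inter> S = {}"
  shows "nowhere_dense_in X S"
  unfolding nowhere_dense_in_def
proof (intro conjI assms(1))
  show "X interior_of (X closure_of S) = {}"
  proof (rule ccontr)
    let ?U = "X interior_of (X closure_of S)"
    assume "?U \<noteq> {}"
    moreover have "openin X ?U" by simp
    ultimately obtain W where W: "openin X W" "W \<noteq> {}" "W \<subseteq> ?U" "W \<inter> S = {}"
      using assms(2)[of ?U] by auto
    have "W \<inter> X closure_of S = {}" using W openin_Int_closure_of_eq_empty by blast
    moreover have "W \<subseteq> X closure_of S" using W(3) interior_of_subset[of X "X closure_of S"] by (rule order_trans)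
    ultimately show False using W(2) by blast
  qed
qed

lemma qc_disc_meager:
  assumes qc: "quasicontinuous X f"
  shows "meager_in X {x\<in>topspace X. \<not>(\<forall>e>0. \<exists>U. openin X U \<and> x \<in> U \<and> (\<forall>y\<in>U. \<bar>f y - f x\<bar> < e))}"
proof -
  define E where "E n = {x\<in>topspace X. \<forall>U. openin X U \<and> x \<in> U \<longrightarrow> (\<exists>y\<in>U. \<bar>f y - f x\<bar> \<ge> 1 / real (Suc n))}" for n
  have eq: "{x\<in>topspace X. \<not>(\<forall>e>0. \<exists>U. openin X U \<and> x \<in> U \<and> (\<forall>y\<in>U. \<bar>f y - f x\<bar> < e))} = \<Union>(range E)"
  proof (intro equalityI subsetI)
    fix x assume "x \<in> {x\<in>topspace X. \<not>(\<forall>e>0. \<exists>U. openin X U \<and> x \<in> U \<and> (\<forall>y\<in>U. \<bar>f y - f x\<bar> < e))}"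
    then obtain e where x: "x \<in> topspace X" "e > 0" and
      e: "\<And>U. openin X U \<Longrightarrow> x \<in> U \<Longrightarrow> \<exists>y\<in>U. \<bar>f y - f x\<bar> \<ge> e"
      by (auto simp: not_less)
    obtain n where n: "1 / real (Suc n) < e" using x(2)
      by (metis nat_approx_posE)
    have "x \<in> E n" unfolding E_def using x e n by (smt (verit) mem_Collect_eq)
    then show "x \<in> \<Union>(range E)" by blast
  next
    fix x assume "x \<in> \<Union>(range E)"
    then obtain n where "x \<in> E n" by blast
    then have xt: "x \<in> topspace X" and
      h: "\<And>U. openin X U \<Longrightarrow> x \<in> U \<Longrightarrow> \<exists>y\<in>U. \<bar>f y - f x\<bar> \<ge> 1 / real (Suc n)"
      by (auto simp: E_def)
    have "\<not>(\<forall>e>0. \<exists>U. openin X U \<and> x \<in> U \<and> (\<forall>y\<in>U. \<bar>f y - f x\<bar> < e))"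
    proof
      assume a: "\<forall>e>0. \<exists>U. openin X U \<and> x \<in> U \<and> (\<forall>y\<in>U. \<bar>f y - f x\<bar> < e)"
      have "(1::real) / real (Suc n) > 0" by simp
      from a[rule_format, OF this] obtain U where U: "openin X U" "x \<in> U" "\<And>y. y \<in> U \<Longrightarrow> \<bar>f y - f x\<bar> < 1 / real (Suc n)"
        by auto
      then show False using h[OF U(1,2)] by (meson not_le)
    qed
    then show "x \<in> {x\<in>topspace X. \<not>(\<forall>e>0. \<exists>U. openin X U \<and> x \<in> U \<and> (\<forall>y\<in>U. \<bar>f y - f x\<bar> < e))}"
      using xt by blast
  qed
  have nd: "nowhere_dense_in X (E n)" for n
  proof (rule nowhere_dense_byW)
    show "E n \<subseteq> topspace X" unfolding E_def by blast
    fix U assume U: "openin X U" "U \<noteq> {}"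
    then obtain x where x: "x \<in> U" by blast
    have xt: "x \<in> topspace X" using U x openin_subset by blast
    define e where "e = 1 / real (Suc n)"
    have e0: "e > 0" by (simp add: e_def)
    obtain W where W: "openin X W" "W \<noteq> {}" "W \<subseteq> U" "f ` W \<subseteq> ball (f x) (e/4)"
      using qc xt U x e0 unfolding quasicontinuous_def
      by (metis centre_in_ball divide_pos_pos open_ball zero_less_numeral)
    have "W \<inter> E n = {}"
    proof (rule ccontr)
      assume "W \<inter> E n \<noteq> {}"
      then obtain w where w: "w \<in> W" "w \<in> E n" by blast
      then obtain y where y: "y \<in> W" "\<bar>f y - f w\<bar> \<ge> e"
        using W(1) unfolding E_def e_def by blast
      have "dist (f x) (f y) < e/4" "dist (f x) (f w) < e/4" using W(4) y(1) w(1) by auto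
      then show False using y(2) e0 unfolding dist_real_def by arith
    qed
    then show "\<exists>W. openin X W \<and> W \<noteq> {} \<and> W \<subseteq> U \<and> W \<inter> E n = {}" using W by blast
  qed
  show ?thesis unfolding meager_in_def eq
    using nd by (intro exI[of _ "range E"]) auto
qed


lemma dir1:
  assumes sep: "separable_space X" and ne: "topspace X \<noteq> {}"
    and lus: "\<forall>M. meager_in X M \<longrightarrow> countable M"
    and K: "compactin (Qp X) K"
  shows "countable_tightness (subtopology (Qp X) K)"
proof -
  define I where "I = topspace X"
  define P where "P = product_topology (\<lambda>_. euclideanreal) I"
  define Q where "Q = {f \<in> extensional I. quasicontinuous X f}"
  have QpX: "Qp X = subtopology P Q" by (simp add: Qp_def P_def Q_def I_def)
  have KQ: "K \<subseteq> Q" and KP: "compactin P K" using K by (auto simp: QpX compactin_subtopology)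
  have T: "subtopology (Qp X) K = subtopology P K"
    using KQ by (simp add: QpX subtopology_subtopology Int_absorb1)
  have KtopP: "K \<subseteq> topspace P" using KP compactin_subset_topspace by blast
  have projc: "continuous_map P euclideanreal (\<lambda>f. f i)" if "i \<in> I" for i
    unfolding P_def using continuous_map_product_projection[OF that, of "\<lambda>_. euclideanreal"] by simp
  have popen: "openin P {f \<in> topspace P. f i \<in> V}" if "i \<in> I" "open V" for i V
    using openin_continuous_map_preimage[OF projc[OF that(1)]] that(2) by simp
  show ?thesis unfolding countable_tightness_def T
  proof (intro ballI allI impI, elim conjE)
    fix z A assume zK0: "z \<in> topspace (subtopology P K)"
      and AK0: "A \<subseteq> topspace (subtopology P K)"
      and zcl: "z \<in> subtopology P K closure_of A"
    have zK: "z \<in> K" and AK: "A \<subseteq> K" using zK0 AK0 KtopP by auto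
    have zclA: "z \<in> P closure_of A" using closure_of_subtopology_subset[of P K A] zcl by blast
    have zQ: "quasicontinuous X z" "z \<in> extensional I" using zK KQ by (auto simp: Q_def)
    define C where "C = {x\<in>I. \<not>(\<forall>e>0. \<exists>U. openin X U \<and> x \<in> U \<and> (\<forall>y\<in>U. \<bar>z y - z x\<bar> < e))}"
    have cC: "countable C" using lus qc_disc_meager[OF zQ(1)] by (simp add: C_def I_def)
    obtain S where S: "countable S" "S \<subseteq> I" "X closure_of S = I"
      using sep unfolding separable_space_def I_def by blast
    have Sne: "S \<noteq> {}" using S(3) ne unfolding I_def by (metis closure_of_empty)
    define S' where "S' = S \<union> C"
    have S': "countable S'" "S' \<noteq> {}" "S' \<subseteq> I" using S cC Sne by (auto simp: S'_def C_def)
    define s where "s = from_nat_into S'"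
    have rs: "range s = S'" unfolding s_def using range_from_nat_into[OF S'(2) S'(1)] .
    have sI: "s i \<in> I" for i using rs S'(3) by blast
    define N where "N n = {f \<in> topspace P. \<forall>i<n. f (s i) \<in> ball (z (s i)) (1 / real (Suc n))}" for n
    have Nopen: "openin P (N n)" for n
    proof -
      have "N n = \<Inter>({topspace P} \<union> (\<lambda>i. {f \<in> topspace P. f (s i) \<in> ball (z (s i)) (1 / real (Suc n))}) ` {..<n})"
        unfolding N_def by auto
      also have "openin P \<dots>"
      proof (intro openin_Inter)
        have po: "openin P {f \<in> topspace P. dist (z (s i)) (f (s i)) < r}" for i r
          using popen[OF sI, of "ball (z (s i)) r" i] by simp
        fix Y assume "Y \<in> {topspace P} \<union> (\<lambda>i. {f \<in> topspace P. f (s i) \<in> ball (z (s i)) (1 / real (Suc n))}) ` {..<n}"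
        then show "openin P Y" using po by auto
      qed auto
      finally show ?thesis .
    qed
    have zN: "z \<in> N n" for n using zK KtopP by (auto simp: N_def)
    have "\<exists>b. b \<in> A \<and> b \<in> N n" for n
      using zclA Nopen zN unfolding in_closure_of by blast
    then obtain b where bA: "\<And>n. b n \<in> A" and bN: "\<And>n. b n \<in> N n" by metis
    define B where "B = range b"
    have BA: "B \<subseteq> A" and cB: "countable B" using bA by (auto simp: B_def)
    define D where "D m = K \<inter> P closure_of (b ` {m..})" for m
    have cs: "compact_space (subtopology P K)" using KP compactin_subspace by blast
    have "(\<Inter>m. D m) \<noteq> {}"
    proof (rule compact_space_imp_nest[OF cs])
      show "closedin (subtopology P K) (D m)" for m
        unfolding D_def closedin_subtopology by (metis closedin_closure_of inf_commute)
      show "D m \<noteq> {}" for m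
      proof -
        have "b m \<in> P closure_of (b ` {m..})"
          using closure_of_subset[of "b ` {m..}" P] bA AK KtopP by auto
        then show ?thesis using bA AK by (auto simp: D_def)
      qed
      show "decseq D" unfolding decseq_def
      proof (intro allI impI)
        fix m n :: nat assume "m \<le> n"
        then have "b ` {n..} \<subseteq> b ` {m..}" by auto
        then have "P closure_of (b ` {n..}) \<subseteq> P closure_of (b ` {m..})" by (rule closure_of_mono)
        then show "D n \<subseteq> D m" unfolding D_def by blast
      qed
    qed
    then obtain g where g: "\<And>m. g \<in> D m" by blast
    have gK: "g \<in> K" using g[of 0] by (simp add: D_def)
    have gB: "g \<in> P closure_of B" using g[of 0] by (simp add: D_def B_def)
    have gQ: "quasicontinuous X g" "g \<in> extensional I" using gK KQ by (auto simp: Q_def)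
    have gs: "g (s i) = z (s i)" for i
    proof (rule ccontr)
      assume ne1: "g (s i) \<noteq> z (s i)"
      define e where "e = \<bar>g (s i) - z (s i)\<bar>"
      have e0: "e > 0" using ne1 by (simp add: e_def)
      obtain m0 where m0: "1 / real (Suc m0) < e/2" using e0
        by (metis half_gt_zero nat_approx_posE)
      define m where "m = max m0 (Suc i)"
      have mi: "i < m" and me: "1 / real (Suc m) < e/2"
      proof -
        show "i < m" by (simp add: m_def)
        have "1 / real (Suc m) \<le> 1 / real (Suc m0)"
          by (intro divide_left_mono) (auto simp: m_def)
        then show "1 / real (Suc m) < e/2" using m0 by linarith
      qed
      have gcl: "g \<in> P closure_of (b ` {m..})" using g[of m] by (simp add: D_def)
      define TT where "TT = {f \<in> topspace P. f (s i) \<in> ball (g (s i)) (e/2)}"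
      have "openin P TT" unfolding TT_def
        by (intro popen sI) auto
      moreover have "g \<in> TT"
        using gK KtopP e0 by (auto simp: TT_def)
      ultimately have "\<exists>y. y \<in> b ` {m..} \<and> y \<in> TT"
        using gcl unfolding in_closure_of by metis
      then obtain n where n: "n \<ge> m" "b n (s i) \<in> ball (g (s i)) (e/2)"
        unfolding TT_def by auto
      have "b n (s i) \<in> ball (z (s i)) (1 / real (Suc n))"
        using bN[of n] n(1) mi by (auto simp: N_def)
      moreover have "1 / real (Suc n) \<le> 1 / real (Suc m)"
        by (intro divide_left_mono) (use n in auto)
      ultimately have 1: "dist (b n (s i)) (z (s i)) < e/2" using me by (simp add: dist_commute)
      have 2: "dist (b n (s i)) (g (s i)) < e/2" using n(2) by (simp add: dist_commute)
      have "dist (g (s i)) (z (s i)) \<le> dist (b n (s i)) (g (s i)) + dist (b n (s i)) (z (s i))"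
        by (rule dist_triangle3)
      then show False using 1 2 by (simp add: e_def dist_real_def)
    qed
    have gz: "g = z"
    proof (rule ext)
      fix x
      show "g x = z x"
      proof (cases "x \<in> I")
        case False
        then show ?thesis using extensional_arb[OF gQ(2) False] extensional_arb[OF zQ(2) False] by simp
      next
        case xI: True
        show ?thesis
        proof (cases "x \<in> S'")
          case True
          then obtain i where "x = s i" using rs by blast
          then show ?thesis using gs by simp
        next
          case False
          then have xC: "x \<notin> C" by (simp add: S'_def)
          show ?thesis
          proof (rule ccontr)
            assume ne1: "g x \<noteq> z x"
            define e where "e = \<bar>g x - z x\<bar>"
            have e0: "e > 0" using ne1 by (simp add: e_def)
            have "\<forall>e>0. \<exists>U. openin X U \<and> x \<in> U \<and> (\<forall>y\<in>U. \<bar>z y - z x\<bar> < e)"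
              using xC xI unfolding C_def by blast
            from this[rule_format, of "e/2"] e0
            obtain U where U: "openin X U" "x \<in> U" "\<And>y. y \<in> U \<Longrightarrow> \<bar>z y - z x\<bar> < e/2"
              by auto
            have qx: "\<forall>V U. open V \<and> g x \<in> V \<and> openin X U \<and> x \<in> U \<longrightarrow>
                (\<exists>W. openin X W \<and> W \<noteq> {} \<and> W \<subseteq> U \<and> g ` W \<subseteq> V)"
              using gQ(1) xI unfolding quasicontinuous_def I_def by blast
            have "\<exists>W. openin X W \<and> W \<noteq> {} \<and> W \<subseteq> U \<and> g ` W \<subseteq> ball (g x) (e/2)"
              using qx[rule_format, of "ball (g x) (e/2)" U] U(1,2) e0 by simp
            then obtain W where W: "openin X W" "W \<noteq> {}" "W \<subseteq> U" "g ` W \<subseteq> ball (g x) (e/2)"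
              by blast
            obtain w where w: "w \<in> W" using W(2) by blast
            have "w \<in> X closure_of S" using openin_subset[OF W(1)] w S(3) unfolding I_def by blast
            then obtain y where y: "y \<in> S" "y \<in> W" using W(1) w unfolding in_closure_of by blast
            then obtain i where "y = s i" using rs S'_def by blast
            then have gy: "g y = z y" using gs by simp
            have "dist (g x) (g y) < e/2" using W(4) y(2) by auto
            moreover have "\<bar>z y - z x\<bar> < e/2" using U(3) W(3) y(2) by blast
            ultimately have h1: "\<bar>g x - g y\<bar> < e/2" "\<bar>z y - z x\<bar> < e/2"
              unfolding dist_real_def by auto
            have "g x - z x = (g x - g y) + (z y - z x)" using gy by simp
            then have "e \<le> \<bar>g x - g y\<bar> + \<bar>z y - z x\<bar>"
              unfolding e_def by (metis abs_triangle_ineq)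
            then show False using h1 by linarith
          qed
        qed
      qed
    qed
    have "z \<in> subtopology P K closure_of B"
    proof -
      have "K \<inter> B = B" using BA AK by blast
      then show ?thesis unfolding closure_of_subtopology using gz gK gB by simp
    qed
    then show "\<exists>B. B \<subseteq> A \<and> countable B \<and> z \<in> subtopology P K closure_of B"
      using BA cB by blast
  qed
qed



context Metric_space
begin

lemma sep_GH:
  assumes sep: "separable_space mtopology" and Fc: "closedin mtopology F"
    and Fi: "mtopology interior_of F = {}" and Fne: "F \<noteq> {}"
  shows "\<exists>G H. openin mtopology G \<and> openin mtopology H \<and> G \<inter> H = {} \<and>
           F \<subseteq> mtopology closure_of G \<and> F \<subseteq> mtopology closure_of H"
proof -
  have FM: "F \<subseteq> M" using closedin_subset[OF Fc] by simp
  have Oo: "openin mtopology (M - F)" using Fc by (metis closedin_def topspace_mtopology)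
  define \<delta> where "\<delta> x = Inf (d x ` F)" for x
  have bdd: "bdd_below (d x ` F)" for x by (rule bdd_belowI[of _ 0]) auto
  have \<delta>le: "\<delta> x \<le> d x c" if "c \<in> F" for x c unfolding \<delta>_def using bdd[of x] that by (simp add: cInf_lower)
  have \<delta>tri: "\<delta> x \<le> d x y + \<delta> y" if "x \<in> M" "y \<in> M" for x y
  proof -
    have "\<delta> x - d x y \<le> \<delta> y" unfolding \<delta>_def[of y]
    proof (rule cInf_greatest)
      show "d y ` F \<noteq> {}" using Fne by simp
      fix t assume "t \<in> d y ` F"
      then obtain c where c: "c \<in> F" "t = d y c" by blast
      have "\<delta> x \<le> d x c" by (rule \<delta>le[OF c(1)])
      also have "\<dots> \<le> d x y + d y c" using triangle that c FM by blast
      finally show "\<delta> x - d x y \<le> t" using c by simp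
    qed
    then show ?thesis by simp
  qed
  have \<delta>pos: "\<delta> x > 0" if xF: "x \<in> M - F" for x
  proof -
    obtain r where r: "r > 0" "mball x r \<subseteq> M - F" using Oo xF unfolding openin_mtopology by blast
    have "r \<le> \<delta> x" unfolding \<delta>_def
    proof (rule cInf_greatest)
      show "d x ` F \<noteq> {}" using Fne by simp
      fix t assume "t \<in> d x ` F"
      then obtain c where c: "c \<in> F" "t = d x c" by blast
      show "r \<le> t"
      proof (rule ccontr)
        assume "\<not> r \<le> t"
        then have "c \<in> mball x r" using c xF FM by auto
        then show False using r c by auto
      qed
    qed
    then show ?thesis using r by simp
  qed
  have near: "\<exists>y. y \<in> M - F \<and> d y c < r" if "c \<in> F" "r > 0" for c r
  proof (rule ccontr)
    assume a: "\<not> (\<exists>y. y \<in> M - F \<and> d y c < r)"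
    have "mball c r \<subseteq> F"
    proof
      fix y assume "y \<in> mball c r"
      then have "y \<in> M" "d y c < r" by (auto simp: commute)
      then show "y \<in> F" using a by blast
    qed
    then have "mball c r \<subseteq> mtopology interior_of F" by (simp add: interior_of_maximal)
    then show False using Fi that FM by auto
  qed
  obtain S where S: "countable S" "S \<subseteq> M" "mtopology closure_of S = M"
    using sep unfolding separable_space_def by auto
  have Sne: "S \<noteq> {}" using S(3) Fne FM by auto
  define s where "s = from_nat_into S"
  define rad where "rad j = 1 / real (Suc (snd (prod_decode j)))" for j
  define src where "src j = s (fst (prod_decode j))" for j
  define tgt where "tgt j = (SOME c. c \<in> F \<and> ((\<exists>c'\<in>F. d (src j) c' < rad j) \<longrightarrow> d (src j) c < rad j))" for j
  have tgt: "tgt j \<in> F \<and> ((\<exists>c'\<in>F. d (src j) c' < rad j) \<longrightarrow> d (src j) (tgt j) < rad j)" for j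
    unfolding tgt_def
  proof (rule someI_ex)
    show "\<exists>c. c \<in> F \<and> ((\<exists>c'\<in>F. d (src j) c' < rad j) \<longrightarrow> d (src j) c < rad j)"
    proof (cases "\<exists>c'\<in>F. d (src j) c' < rad j")
      case True then show ?thesis by blast
    next
      case False then show ?thesis using Fne by blast
    qed
  qed
  have tF: "tgt j \<in> F" for j using tgt by blast
  have radpos: "rad j > 0" for j by (simp add: rad_def)
  define x where "x = rec_nat (SOME y. y \<in> M - F \<and> d y (tgt 0) < rad 0)
      (\<lambda>n xn. SOME y. y \<in> M - F \<and> d y (tgt (Suc n div 2)) < min (rad (Suc n div 2)) (\<delta> xn / 2))"
  have x0: "x 0 = (SOME y. y \<in> M - F \<and> d y (tgt 0) < rad 0)" by (simp add: x_def)
  have xS: "x (Suc n) = (SOME y. y \<in> M - F \<and> d y (tgt (Suc n div 2)) < min (rad (Suc n div 2)) (\<delta> (x n) / 2))"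
    for n by (simp add: x_def)
  have base: "x 0 \<in> M - F \<and> d (x 0) (tgt 0) < rad 0"
    unfolding x0 by (rule someI_ex) (use near[OF tF radpos] in blast)
  have step: "x (Suc n) \<in> M - F \<and> d (x (Suc n)) (tgt (Suc n div 2)) < min (rad (Suc n div 2)) (\<delta> (x n) / 2)"
    if "x n \<in> M - F" for n
  proof -
    have "min (rad (Suc n div 2)) (\<delta> (x n) / 2) > 0" using \<delta>pos[OF that] radpos by simp
    from near[OF tF this] show ?thesis unfolding xS by (rule someI_ex)
  qed
  have xM: "x n \<in> M - F" for n
    by (induction n) (use base step in auto)
  have xt: "d (x n) (tgt (n div 2)) < rad (n div 2)" for n
  proof (cases n)
    case 0 then show ?thesis using base by simp
  next
    case (Suc m) then show ?thesis using step[OF xM[of m]] by simp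
  qed
  have dec: "\<delta> (x (Suc n)) < \<delta> (x n) / 2" for n
    using \<delta>le[OF tF, of "x (Suc n)" "Suc n div 2"] step[OF xM[of n]] by simp
  have decm: "m < n \<Longrightarrow> \<delta> (x n) < \<delta> (x m) / 2" for m n
  proof (induction n)
    case 0 then show ?case by simp
  next
    case (Suc n)
    show ?case
    proof (cases "m = n")
      case True then show ?thesis using dec by simp
    next
      case False
      then have "\<delta> (x n) < \<delta> (x m) / 2" using Suc by simp
      moreover have "\<delta> (x m) > 0" "\<delta> (x n) > 0" using \<delta>pos xM by auto
      ultimately show ?thesis using dec[of n] by linarith
    qed
  qed
  define B where "B n = mball (x n) (\<delta> (x n) / 4)" for n
  have disj0: "B m \<inter> B n = {}" if "m < n" for m n
  proof (rule ccontr)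
    assume "B m \<inter> B n \<noteq> {}"
    then obtain w where w: "w \<in> M" "d (x m) w < \<delta> (x m) / 4" "d (x n) w < \<delta> (x n) / 4"
      by (auto simp: B_def)
    have xmM: "x m \<in> M" and xnM: "x n \<in> M" using xM by auto
    have "d (x m) (x n) \<le> d (x m) w + d w (x n)" using triangle xmM xnM w(1) by blast
    moreover have "d w (x n) = d (x n) w" by (rule commute)
    moreover have "\<delta> (x m) \<le> d (x m) (x n) + \<delta> (x n)" using \<delta>tri xmM xnM by blast
    moreover have "\<delta> (x n) < \<delta> (x m) / 2" using decm that by blast
    moreover have "\<delta> (x m) > 0" using \<delta>pos xM by auto
    ultimately show False using w by linarith
  qed
  have disj: "B m \<inter> B n = {}" if "m \<noteq> n" for m n
    using disj0[of m n] disj0[of n m] that by (metis Int_commute linorder_neqE_nat)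
  have Bo: "openin mtopology (B n)" for n by (simp add: B_def)
  have xB: "x n \<in> B n" for n using xM \<delta>pos by (auto simp: B_def)
  have clos: "F \<subseteq> mtopology closure_of (\<Union>n\<in>{n. P n}. B n)"
    if hP: "\<And>j. \<exists>n. n div 2 = j \<and> P n" for P
  proof
    fix y assume yF: "y \<in> F"
    have yM: "y \<in> M" using yF FM by auto
    show "y \<in> mtopology closure_of (\<Union>n\<in>{n. P n}. B n)"
      unfolding in_closure_of
    proof (intro conjI allI impI)
      show "y \<in> topspace mtopology" using yF FM by auto
      fix U assume "y \<in> U \<and> openin mtopology U"
      then obtain \<epsilon> where \<epsilon>: "\<epsilon> > 0" "mball y \<epsilon> \<subseteq> U" unfolding openin_mtopology by blast
      obtain k where k: "1 / real (Suc k) < \<epsilon> / 3" using \<epsilon>(1)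
        by (metis divide_pos_pos nat_approx_posE zero_less_numeral)
      have "y \<in> mtopology closure_of S" using S(3) yF FM by auto
      moreover have "y \<in> mball y (1 / real (Suc k))" using yM by simp
      ultimately obtain s' where s': "s' \<in> S" "s' \<in> mball y (1 / real (Suc k))"
        unfolding in_closure_of by (meson openin_mball)
      obtain i where i: "s i = s'" using from_nat_into_surj[OF S(1) s'(1)] s_def by blast
      define j where "j = prod_encode (i, k)"
      have srcj: "src j = s'" and radj: "rad j = 1 / real (Suc k)"
        by (simp_all add: src_def rad_def j_def i)
      have ys: "d s' y < rad j" using s'(2) radj by (simp add: commute)
      then have st: "d s' (tgt j) < rad j" using tgt[of j] yF srcj by auto
      obtain n where n: "n div 2 = j" "P n" using hP by blast
      have xtn: "d (x n) (tgt j) < rad j" using xt[of n] n(1) by simp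
      have s'M: "s' \<in> M" using s' S(2) by auto
      have tM: "tgt j \<in> M" using tF FM by auto
      have xnM: "x n \<in> M" using xM by auto
      have "d y (x n) \<le> d y s' + d s' (x n)" using triangle yM s'M xnM by blast
      moreover have "d s' (x n) \<le> d s' (tgt j) + d (tgt j) (x n)" using triangle s'M tM xnM by blast
      moreover have "d y s' = d s' y" "d (tgt j) (x n) = d (x n) (tgt j)" by (simp_all add: commute)
      ultimately have "d y (x n) < 3 * (1 / real (Suc k))" using ys st xtn radj by linarith
      then have "x n \<in> mball y \<epsilon>" using k yM xnM by simp
      then have "x n \<in> U" using \<epsilon>(2) by blast
      moreover have "x n \<in> (\<Union>n\<in>{n. P n}. B n)" using xB n(2) by blast
      ultimately show "\<exists>z. z \<in> (\<Union>n\<in>{n. P n}. B n) \<and> z \<in> U" by blast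
    qed
  qed
  define G where "G = (\<Union>n\<in>{n. even n}. B n)"
  define H where "H = (\<Union>n\<in>{n. odd n}. B n)"
  have "openin mtopology G" unfolding G_def using Bo by blast
  moreover have "openin mtopology H" unfolding H_def using Bo by blast
  moreover have "G \<inter> H = {}"
  proof (rule ccontr)
    assume "G \<inter> H \<noteq> {}"
    then obtain w m n where "even m" "odd n" "w \<in> B m" "w \<in> B n" by (auto simp: G_def H_def)
    moreover have "m \<noteq> n" using calculation by auto
    ultimately show False using disj by blast
  qed
  moreover have "F \<subseteq> mtopology closure_of G" unfolding G_def
    by (rule clos) (rule_tac x="2*j" in exI, simp)
  moreover have "F \<subseteq> mtopology closure_of H" unfolding H_def
    by (rule clos) (rule_tac x="2*j+1" in exI, simp)
  ultimately show ?thesis by blast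
qed

end



lemma dir2:
  assumes sep: "separable_space X" and met: "metrizable_space X"
    and nl: "\<not> (\<forall>M. meager_in X M \<longrightarrow> countable M)"
  shows "\<exists>K. compactin (Qp X) K \<and> \<not> countable_tightness (subtopology (Qp X) K)"
proof -
  obtain Mg where Mg: "meager_in X Mg" "uncountable Mg" using nl by blast
  then obtain \<F> where \<F>: "countable \<F>" "\<forall>S\<in>\<F>. nowhere_dense_in X S" "Mg = \<Union>\<F>"
    unfolding meager_in_def by blast
  have "\<exists>N\<in>\<F>. uncountable N"
  proof (rule ccontr)
    assume "\<not> (\<exists>N\<in>\<F>. uncountable N)"
    then have "countable (\<Union>S\<in>\<F>. S)" using \<F>(1) by (intro countable_UN) auto
    then show False using Mg(2) \<F>(3) by simp
  qed
  then obtain N where N: "N \<in> \<F>" "uncountable N" by blast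
  have Nt: "N \<subseteq> topspace X" and Ni: "X interior_of (X closure_of N) = {}"
    using \<F>(2) N(1) unfolding nowhere_dense_in_def by auto
  define F where "F = X closure_of N"
  have Fc: "closedin X F" by (simp add: F_def)
  have Fi: "X interior_of F = {}" using Ni F_def by simp
  have NF: "N \<subseteq> F" using closure_of_subset[OF Nt] F_def by simp
  have Fu: "uncountable F" using N(2) NF countable_subset by blast
  have Fne: "F \<noteq> {}" using Fu by auto
  have Ft: "F \<subseteq> topspace X" by (simp add: F_def closure_of_subset_topspace)
  obtain Mm d where md: "Metric_space Mm d" "X = Metric_space.mtopology Mm d"
    using met unfolding metrizable_space_def by blast
  have "\<exists>G H. openin X G \<and> openin X H \<and> G \<inter> H = {} \<and> F \<subseteq> X closure_of G \<and> F \<subseteq> X closure_of H"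
    using Metric_space.sep_GH[OF md(1), of F] sep Fc Fi Fne md(2) by simp
  then obtain G H where GH: "openin X G" "openin X H" "G \<inter> H = {}"
    "F \<subseteq> X closure_of G" "F \<subseteq> X closure_of H" by blast
  have HclG: "H \<inter> X closure_of G = {}" using openin_Int_closure_of_eq_empty[OF GH(2)] GH(3) by blast
  have nonF: "W - F \<noteq> {}" if "openin X W" "W \<noteq> {}" for W
  proof
    assume "W - F = {}"
    then have "W \<subseteq> F" by blast
    then have "W \<subseteq> X interior_of F" using that(1) by (simp add: interior_of_maximal)
    then show False using Fi that(2) by blast
  qed
  define I where "I = topspace X"
  define P where "P = product_topology (\<lambda>_. euclideanreal) I"
  define Q where "Q = {f \<in> extensional I. quasicontinuous X f}"
  have QpX: "Qp X = subtopology P Q" by (simp add: Qp_def P_def Q_def I_def)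
  define g where "g x = (if x \<in> X closure_of G then 1 else 0 :: real)" for x
  define C where "C x = (if x \<in> F then {0,1} else {g x} :: real set)" for x
  define K where "K = PiE I C"
  have KP: "compactin P K" unfolding K_def P_def compactin_PiE
    by (auto intro!: finite_imp_compactin simp: C_def)
  have Kqc: "quasicontinuous X f" if fK: "f \<in> K" for f
    unfolding quasicontinuous_def
  proof (intro ballI allI impI, elim conjE)
    fix x V U assume xt: "x \<in> topspace X" and V: "open V" "f x \<in> V" and U: "openin X U" "x \<in> U"
    have fx: "f x \<in> C x" using fK xt by (auto simp: K_def I_def)
    have fg: "f w = g w" if "w \<in> topspace X" "w \<notin> F" for w
      using PiE_mem[OF fK[unfolded K_def I_def] that(1)] that(2) by (simp add: C_def)
    have Ut: "U \<subseteq> topspace X" using openin_subset[OF U(1)] .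
    let ?G = "\<exists>W. openin X W \<and> W \<noteq> {} \<and> W \<subseteq> U \<and> f ` W \<subseteq> V"
    have caseA: ?G if "f x = 1" "x \<in> X closure_of G"
    proof -
      have "U \<inter> G \<noteq> {}" using that(2) U unfolding in_closure_of by blast
      moreover have oUG: "openin X (U \<inter> G)" using U(1) GH(1) by blast
      ultimately have ne: "U \<inter> G - F \<noteq> {}" using nonF by blast
      have oW: "openin X (U \<inter> G - F)" using oUG Fc by (simp add: openin_diff)
      have "f w = 1" if "w \<in> U \<inter> G - F" for w
      proof -
        have "w \<in> X closure_of G" using that closure_of_subset[OF openin_subset[OF GH(1)]] by blast
        then show ?thesis using fg[of w] that Ut by (auto simp: g_def)
      qed
      then have "f ` (U \<inter> G - F) \<subseteq> V" using V(2) \<open>f x = 1\<close> by auto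
      then show ?thesis using ne oW by (intro exI[of _ "U \<inter> G - F"]) blast
    qed
    have caseB: ?G if "f x = 0" "x \<in> X closure_of H"
    proof -
      have "U \<inter> H \<noteq> {}" using that(2) U unfolding in_closure_of by blast
      moreover have oUH: "openin X (U \<inter> H)" using U(1) GH(2) by blast
      ultimately have ne: "U \<inter> H - F \<noteq> {}" using nonF by blast
      have oW: "openin X (U \<inter> H - F)" using oUH Fc by (simp add: openin_diff)
      have "f w = 0" if "w \<in> U \<inter> H - F" for w
      proof -
        have "w \<notin> X closure_of G" using that HclG by blast
        then show ?thesis using fg[of w] that Ut by (auto simp: g_def)
      qed
      then have "f ` (U \<inter> H - F) \<subseteq> V" using V(2) \<open>f x = 0\<close> by auto
      then show ?thesis using ne oW by (intro exI[of _ "U \<inter> H - F"]) blast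
    qed
    have caseC: ?G if "f x = 0" "x \<notin> F" "x \<notin> X closure_of G"
    proof -
      have oW: "openin X (U - X closure_of G - F)" using U(1) Fc
        by (simp add: openin_diff)
      have ne: "U - X closure_of G - F \<noteq> {}" using that U(2) by blast
      have "f w = 0" if "w \<in> U - X closure_of G - F" for w
        using fg[of w] that Ut by (auto simp: g_def)
      then have "f ` (U - X closure_of G - F) \<subseteq> V" using V(2) \<open>f x = 0\<close> by auto
      then show ?thesis using ne oW by (intro exI[of _ "U - X closure_of G - F"]) blast
    qed
    show "\<exists>W. openin X W \<and> W \<noteq> {} \<and> W \<subseteq> U \<and> f ` W \<subseteq> V"
    proof (cases "x \<in> F")
      case True
      then have "f x = 0 \<or> f x = 1" using fx by (simp add: C_def)
      then show ?thesis
      proof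
        assume "f x = 0" then show ?thesis using caseB True GH(5) by blast
      next
        assume "f x = 1" then show ?thesis using caseA True GH(4) by blast
      qed
    next
      case False
      then have fxg: "f x = g x" using fx by (simp add: C_def)
      show ?thesis
      proof (cases "x \<in> X closure_of G")
        case True then show ?thesis using caseA fxg by (simp add: g_def)
      next
        case nG: False
        then show ?thesis using caseC fxg False by (simp add: g_def)
      qed
    qed
  qed
  have KQ: "K \<subseteq> Q" using Kqc by (auto simp: Q_def K_def PiE_def)
  have compK: "compactin (Qp X) K" using KP KQ by (simp add: QpX compactin_subtopology)
  have KtopP: "K \<subseteq> topspace P" using KP compactin_subset_topspace by blast
  have T: "subtopology (Qp X) K = subtopology P K"
    using KQ by (simp add: QpX subtopology_subtopology Int_absorb1)
  define z where "z = (\<lambda>x\<in>I. if x \<in> F then 1 else g x)"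
  define A where "A = {f \<in> K. finite {x \<in> F. f x \<noteq> 0}}"
  have zK: "z \<in> K" by (auto simp: z_def K_def C_def)
  have AK: "A \<subseteq> K" by (auto simp: A_def)
  have zclA: "z \<in> P closure_of A"
    unfolding in_closure_of
  proof (intro conjI allI impI)
    show "z \<in> topspace P" using zK KtopP by blast
    fix Ob assume zoO: "z \<in> Ob \<and> openin P Ob"
    then have zO: "z \<in> Ob" and oO: "openin P Ob" by auto
    obtain U where U: "finite {i \<in> I. U i \<noteq> topspace euclideanreal}"
      "z \<in> PiE I U" "PiE I U \<subseteq> Ob"
      using oO zO unfolding P_def openin_product_topology_alt by blast
    define a where "a = (\<lambda>x\<in>I. if x \<in> F then (if U x \<noteq> UNIV then 1 else 0) else g x)"
    have aK: "a \<in> K" by (auto simp: a_def K_def C_def)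
    have "{x \<in> F. a x \<noteq> 0} \<subseteq> {i \<in> I. U i \<noteq> topspace euclideanreal}"
      using Ft by (auto simp: a_def I_def split: if_splits)
    then have "finite {x \<in> F. a x \<noteq> 0}" using U(1) finite_subset by blast
    then have aA: "a \<in> A" using aK by (simp add: A_def)
    have "a \<in> PiE I U"
    proof -
      have "a i \<in> U i" if "i \<in> I" for i
      proof (cases "U i = UNIV")
        case True then show ?thesis by simp
      next
        case False
        then have "a i = z i" using that by (simp add: a_def z_def)
        then show ?thesis using U(2) that by (simp add: PiE_iff)
      qed
      then show ?thesis by (auto simp: a_def PiE_iff)
    qed
    then show "\<exists>y. y \<in> A \<and> y \<in> Ob" using aA U(3) by blast
  qed
  have "\<not> countable_tightness (subtopology (Qp X) K)"
  proof
    assume ct: "countable_tightness (subtopology (Qp X) K)"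
    have zT: "z \<in> topspace (subtopology P K)" using zK KtopP by auto
    have AT: "A \<subseteq> topspace (subtopology P K)" using AK KtopP by auto
    have "z \<in> subtopology P K closure_of A"
      unfolding closure_of_subtopology using zK zclA AK by (simp add: Int_absorb1)
    then obtain B where B: "B \<subseteq> A" "countable B" "z \<in> subtopology P K closure_of B"
      using ct zT AT unfolding countable_tightness_def T by blast
    have zB: "z \<in> P closure_of B" using B(3) closure_of_subtopology_subset[of P K B] by blast
    define SS where "SS = (\<Union>b\<in>B. {x \<in> F. b x \<noteq> 0})"
    have "countable SS" unfolding SS_def
      using B(1,2) by (intro countable_UN) (auto simp: A_def intro: countable_finite)
    then obtain y where y: "y \<in> F" "y \<notin> SS" using Fu
      by (metis countable_subset subsetI)
    have yI: "y \<in> I" using y Ft I_def by blast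
    define Ob where "Ob = {f \<in> topspace P. f y \<in> {0<..}}"
    have "openin P Ob" unfolding Ob_def P_def
      using openin_continuous_map_preimage[OF continuous_map_product_projection[OF yI, of "\<lambda>_. euclideanreal"], of "{0<..}"]
      by (simp del: greaterThan_iff)
    moreover have "z \<in> Ob" using zK KtopP yI y(1) by (auto simp: Ob_def z_def)
    ultimately obtain b where b: "b \<in> B" "b \<in> Ob" using zB unfolding in_closure_of by blast
    have "b y = 0" using b(1) y by (auto simp: SS_def)
    then show False using b(2) by (simp add: Ob_def)
  qed
  then show ?thesis using compK by blast
qed

theorem corollary5p2:
  fixes X :: "'a topology"
  assumes "separable_space X" and "metrizable_space X" and "uncountable (topspace X)"
  shows "lusin_set X \<longleftrightarrow>
           (\<forall>K. compactin (Qp X) K \<longrightarrow> countable_tightness (subtopology (Qp X) K))"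
proof
  assume "lusin_set X"
  then have lus: "\<forall>M. meager_in X M \<longrightarrow> countable M" by (simp add: lusin_set_def)
  have ne: "topspace X \<noteq> {}" using assms(3) by auto
  show "\<forall>K. compactin (Qp X) K \<longrightarrow> countable_tightness (subtopology (Qp X) K)"
    using dir1[OF assms(1) ne lus] by blast
next
  assume h: "\<forall>K. compactin (Qp X) K \<longrightarrow> countable_tightness (subtopology (Qp X) K)"
  show "lusin_set X"
  proof (rule ccontr)
    assume "\<not> lusin_set X"
    then have "\<not> (\<forall>M. meager_in X M \<longrightarrow> countable M)" using assms by (simp add: lusin_set_def)
    then show False using dir2[OF assms(1,2)] h by blast
  qed
qed

end
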